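(* Let $L\geq1$ be an integer, $P\geq0$, $p_B\in[0,1]$, and $\alpha\sim\mathrm{Binomial}(L,1-p_B)$. For integers $i\geq0$ let $$\bar R(i):=\mathbb{E}\Big[\log\Big(1+\Big|\textstyle\sum_{l=1}^i e^{j\theta_l}\Big|^2P\Big)\Big],$$ where $\theta_1,\theta_2,\ldots$ are i.i.d. $\mathrm{Uniform}(0,2\pi)$ (independent of $\alpha$; the expectation is over the $\theta_l$ only, so $\bar R$ is a deterministic function). Then $$\sup_{r\in\mathbb{R}}r\cdot\mathbb{P}\big(\bar R(\alpha)\geq r\big)=\max_{i\in\{1,\ldots,L\}}\mathbb{P}(\alpha\geq i)\,\bar R(i).$$
   Context: The left-hand side is the outage rate asymptotically (in the frame length) achievable by non-coherent joint transmission with phase diversity over a multi-point intermittent block fading channel with $L$ transmitters, each blocked independently with probability $p_B$. $\log$ is the logarithm in a fixed base. *)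

theory Defs
  imports "HOL-Probability.Probability"
begin

definition phase_measure :: "nat \<Rightarrow> (nat \<Rightarrow> real) measure" where
  "phase_measure i = PiM {..<i} (\<lambda>_. uniform_measure lborel {0..2*pi})"

definition Rbar :: "real \<Rightarrow> real \<Rightarrow> nat \<Rightarrow> real" where
  "Rbar b P i = (\<integral>\<theta>. log b (1 + (cmod (\<Sum>l<i. cis (\<theta> l)))^2 * P) \<partial>phase_measure i)"

end

theory Submission
  imports Defs "HOL-Complex_Analysis.Complex_Analysis"
begin

lemma J0_01:
  fixes z :: complex assumes "norm z < 1"
  shows "((\<lambda>t. Ln (1 + z * exp (2 * of_real pi * \<i> * of_real t))) has_integral 0) {0..1}"
proof -
  have hol: "(\<lambda>w. Ln (1 + z * w)) holomorphic_on ball 0 1"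
  proof -
    have "\<And>w. w \<in> ball 0 1 \<Longrightarrow> 1 + z * w \<notin> \<real>\<^sub>\<le>\<^sub>0"
    proof
      fix w :: complex assume w: "w \<in> ball 0 1" and n: "1 + z * w \<in> \<real>\<^sub>\<le>\<^sub>0"
      have "norm (z*w) < 1" using w assms mult_left_mono[of "cmod w" 1 "cmod z"] by (simp add: norm_mult dist_norm)
      hence "Re (z*w) > -1" using abs_Re_le_cmod[of "z*w"] by linarith
      thus False using n by (auto simp: complex_nonpos_Reals_iff)
    qed
    thus ?thesis by (intro holomorphic_intros) auto
  qed
  have cont: "continuous_on (cball 0 1) (\<lambda>w. Ln (1 + z * w))"
  proof -
    have "\<And>w. w \<in> cball 0 1 \<Longrightarrow> 1 + z * w \<notin> \<real>\<^sub>\<le>\<^sub>0"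
    proof
      fix w :: complex assume w: "w \<in> cball 0 1" and n: "1 + z * w \<in> \<real>\<^sub>\<le>\<^sub>0"
      have "norm (z*w) < 1" using w assms mult_left_mono[of "cmod w" 1 "cmod z"] by (simp add: norm_mult dist_norm)
      hence "Re (z*w) > -1" using abs_Re_le_cmod[of "z*w"] by linarith
      thus False using n by (auto simp: complex_nonpos_Reals_iff)
    qed
    thus ?thesis by (intro continuous_intros) auto
  qed
  have "((\<lambda>u. Ln (1 + z * u) / (u - 0)) has_contour_integral (2 * of_real pi * \<i> * Ln (1 + z * 0))) (circlepath 0 1)"
    by (rule Cauchy_integral_circlepath[OF cont hol]) simp
  hence "((\<lambda>t. Ln (1 + z * exp (2 * of_real pi * \<i> * of_real t)) * (2 * of_real pi * \<i>)) has_integral 0) {0..1}"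
    unfolding has_contour_integral_def
  proof (subst (asm) has_integral_cong)
    fix x :: real assume "x \<in> {0..1}"
    thus "Ln (1 + z * circlepath 0 1 x) / (circlepath 0 1 x - 0) * vector_derivative (circlepath 0 1) (at x within {0..1})
       = Ln (1 + z * exp (2 * of_real pi * \<i> * of_real x)) * (2 * of_real pi * \<i>)"
      using vector_derivative_circlepath01[of x 0 1] by (simp add: circlepath)
  qed simp
  hence "((\<lambda>t. Ln (1 + z * exp (2 * of_real pi * \<i> * of_real t)) * (2 * of_real pi * \<i>) * (1 / (2 * of_real pi * \<i>))) has_integral 0 * (1 / (2 * of_real pi * \<i>))) {0..1}"
    by (rule has_integral_mult_left)
  thus ?thesis by simp
qed

lemma J0:
  fixes z :: complex assumes "norm z < 1"
  shows "((\<lambda>t. ln (cmod (1 + z * cis t))) has_integral 0) {0..2*pi}"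
proof -
  have nz: "1 + z * w \<noteq> 0" if "cmod w = 1" for w
  proof
    assume "1 + z * w = 0"
    hence "z * w = -1" by (simp add: add_eq_0_iff)
    hence "cmod z * cmod w = 1" by (metis norm_minus_cancel norm_mult norm_one)
    thus False using that assms by simp
  qed
  have "((\<lambda>t. Re (Ln (1 + z * exp (2 * of_real pi * \<i> * of_real t)))) has_integral 0) {0..1}"
    using has_integral_Re[OF J0_01[OF assms]] by simp
  hence "((\<lambda>t. ln (cmod (1 + z * exp (2 * of_real pi * \<i> * of_real t)))) has_integral 0) {0..1}"
  proof (rule has_integral_cong[THEN iffD1, rotated])
    fix t :: real
    have "cmod (exp (2 * of_real pi * \<i> * of_real t)) = 1" by (simp add: norm_exp_eq_Re)
    thus "Re (Ln (1 + z * exp (2 * of_real pi * \<i> * of_real t))) = ln (cmod (1 + z * exp (2 * of_real pi * \<i> * of_real t)))"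
      using nz by simp
  qed
  from has_integral_stretch_real[OF this, of "1/(2*pi)"]
  have "((\<lambda>x. ln (cmod (1 + z * exp (2 * of_real pi * \<i> * of_real (1/(2*pi) * x))))) has_integral 0) ((\<lambda>x. x / (1/(2*pi))) ` {0..1})"
    by simp
  moreover have "(\<lambda>x. x / (1/(2*pi))) ` {0..1} = {0..2*pi}"
    by (auto simp: image_iff intro!: bexI[where x="_ / (2*pi)"])
  moreover have "exp (2 * of_real pi * \<i> * of_real (1/(2*pi) * x)) = cis x" for x
    by (simp add: cis_conv_exp field_simps)
  ultimately show ?thesis by simp
qed

lemma J:
  fixes A B :: complex assumes "A \<noteq> 0" "cmod A \<noteq> cmod B"
  shows "\<exists>v \<ge> 2*pi*ln (cmod A). ((\<lambda>t. ln (cmod (A + B * cis t))) has_integral v) {0..2*pi}"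
proof (cases "cmod B < cmod A")
  case True
  have "cmod (B/A) < 1" using True assms by (simp add: norm_divide divide_less_eq)
  from has_integral_add[OF has_integral_const_real[of "ln (cmod A)" 0 "2*pi"] J0[OF this]]
  have "((\<lambda>t. ln (cmod A) + ln (cmod (1 + B / A * cis t))) has_integral 2*pi*ln (cmod A)) {0..2*pi}"
    by simp
  moreover have "ln (cmod A) + ln (cmod (1 + B / A * cis t)) = ln (cmod (A + B * cis t))" for t
  proof -
    have "A + B * cis t = A * (1 + B / A * cis t)" using assms by (simp add: field_simps)
    moreover have "1 + B / A * cis t \<noteq> 0"
    proof
      assume "1 + B / A * cis t = 0"
      hence "cmod (B / A * cis t) = 1" by (metis add_eq_0_iff norm_minus_cancel norm_one)
      thus False using \<open>cmod (B/A) < 1\<close> assms by (simp add: norm_mult norm_divide)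
    qed
    ultimately show ?thesis using assms by (simp add: norm_mult ln_mult)
  qed
  ultimately show ?thesis by auto
next
  case False
  hence lt: "cmod A < cmod B" using assms by simp
  hence B0: "B \<noteq> 0" by auto
  have "cmod (cnj (A/B)) < 1" using lt B0 by (simp add: norm_divide divide_less_eq)
  from has_integral_add[OF has_integral_const_real[of "ln (cmod B)" 0 "2*pi"] J0[OF this]]
  have "((\<lambda>t. ln (cmod B) + ln (cmod (1 + cnj (A/B) * cis t))) has_integral 2*pi*ln (cmod B)) {0..2*pi}"
    by simp
  moreover have "ln (cmod B) + ln (cmod (1 + cnj (A/B) * cis t)) = ln (cmod (A + B * cis t))" for t
  proof -
    have e: "cmod (1 + cnj (A/B) * cis t) = cmod (A/B + cis t)"
    proof -
      have "cmod (1 + cnj (A/B) * cis t) = cmod (cnj (1 + cnj (A/B) * cis t))" by (rule complex_mod_cnj[symmetric])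
      also have "cnj (1 + cnj (A/B) * cis t) = (A/B) * cis (-t) + 1" by (simp add: cis_cnj)
      also have "\<dots> = cis (-t) * (A/B + cis t)" by (simp add: algebra_simps cis_mult)
      also have "cmod \<dots> = cmod (A/B + cis t)" by (simp add: norm_mult)
      finally show ?thesis .
    qed
    have "A + B * cis t = B * (A/B + cis t)" using B0 by (simp add: field_simps)
    moreover have "A/B + cis t \<noteq> 0"
    proof
      assume "A/B + cis t = 0"
      hence "cmod (A/B) = 1" by (metis add_eq_0_iff norm_minus_cancel norm_cis)
      thus False using \<open>cmod (cnj (A/B)) < 1\<close> assms by (simp add: norm_divide)
    qed
    ultimately show ?thesis using B0 e by (simp add: norm_mult ln_mult)
  qed
  moreover have "2*pi*ln (cmod A) \<le> 2*pi*ln (cmod B)" using lt assms by (intro mult_left_mono ln_mono) auto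
  ultimately show ?thesis by (intro exI[where x="2*pi*ln (cmod B)"]) auto
qed

lemma cs_ineq:
  fixes s w :: complex and l P :: real
  assumes "P \<ge> 0" "l \<ge> 0"
  shows "cmod (1 + of_real (l*P) * cnj s * w)^2 \<le> (1 + l^2*P*cmod s^2) * (1 + cmod w^2 * P)"
proof -
  define a where "a = l*P*cmod s*cmod w"
  have a0: "a \<ge> 0" using assms by (simp add: a_def)
  have "cmod (1 + of_real (l*P) * cnj s * w) \<le> 1 + cmod (of_real (l*P) * cnj s * w)"
    by (metis norm_one norm_triangle_ineq)
  also have "cmod (of_real (l*P) * cnj s * w) = a" using assms by (simp add: a_def norm_mult)
  finally have "cmod (1 + of_real (l*P) * cnj s * w)^2 \<le> (1 + a)^2"
    by (intro power_mono) auto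
  also have "(1 + l^2*P*cmod s^2) * (1 + cmod w^2 * P) - (1+a)^2 = P*(l*cmod s - cmod w)^2"
    by (simp add: a_def algebra_simps power2_eq_square)
  hence "(1 + a)^2 \<le> (1 + l^2*P*cmod s^2) * (1 + cmod w^2 * P)"
    using assms by (smt (verit) mult_nonneg_nonneg zero_le_power2)
  finally show ?thesis .
qed

lemma C_hk:
  fixes s :: complex and P :: real
  assumes P: "P \<ge> 0"
  shows "2*pi*ln (1 + cmod s^2 * P) \<le> integral {0..2*pi} (\<lambda>x. ln (1 + cmod (s + cis x)^2 * P))"
proof -
  define F where "F = (\<lambda>x. ln (1 + cmod (s + cis x)^2 * P))"
  define I where "I = integral {0..2*pi} F"
  have "continuous_on {0..2*pi} F" unfolding F_def
    by (intro continuous_intros) (use P in \<open>auto simp: add_nonneg_eq_0_iff\<close>)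
  hence FI: "(F has_integral I) {0..2*pi}" unfolding I_def
    using integrable_continuous_interval integrable_integral by blast
  define t where "t = cmod s^2"
  have t0: "t \<ge> 0" by (simp add: t_def)
  define h where "h = (\<lambda>l::real. 2*pi*(2*ln(1+l*P*t) - ln(1+l^2*P*t)))"
  have key: "h l \<le> I" if l0: "l \<ge> 0" and ne: "1 + l*P*t \<noteq> l*P*cmod s" for l
  proof -
    define A where "A = complex_of_real (1 + l*P*t)"
    define B where "B = of_real (l*P) * cnj s"
    have Apos: "1 + l*P*t > 0" using l0 P t0 by (simp add: add_pos_nonneg)
    have A0: "A \<noteq> 0" using Apos unfolding A_def by (metis of_real_eq_0_iff order_less_irrefl)
    have cA: "cmod A = 1 + l*P*t" using Apos unfolding A_def norm_of_real by simp
    have cB: "cmod B = l*P*cmod s" using l0 P by (simp add: B_def norm_mult)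
    obtain v where v: "v \<ge> 2*pi*ln (cmod A)" "((\<lambda>x. ln (cmod (A + B * cis x))) has_integral v) {0..2*pi}"
      using J[OF A0, of B] cA cB ne by auto
    define c where "c = ln (1 + l^2*P*t)"
    have G: "((\<lambda>x. 2 * ln (cmod (A + B * cis x)) - c) has_integral (2 * v - 2*pi*c)) {0..2*pi}"
      using has_integral_diff[OF has_integral_mult_right[OF v(2), of 2] has_integral_const_real[of c 0 "2*pi"]]
      by simp
    have pw: "2 * ln (cmod (A + B * cis x)) - c \<le> F x" for x
    proof -
      have eq: "A + B * cis x = 1 + of_real (l*P) * cnj s * (s + cis x)"
      proof -
        have cs: "cnj s * s = complex_of_real t" unfolding t_def
          using complex_norm_square[of s] by (simp add: mult.commute)
        have "of_real (l*P) * cnj s * (s + cis x) = of_real (l*P) * (cnj s * s) + B * cis x"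
          unfolding B_def by (simp only: distrib_left mult.assoc)
        also have "\<dots> = of_real (l*P*t) + B * cis x" by (simp only: cs of_real_mult)
        finally show ?thesis unfolding A_def by simp
      qed
      have X: "cmod (A + B * cis x)^2 \<le> (1 + l^2*P*t) * (1 + cmod (s + cis x)^2 * P)"
        unfolding eq t_def by (rule cs_ineq[OF P l0])
      have p1: "1 + l^2*P*t > 0" using P t0 by (simp add: add_pos_nonneg)
      have p2: "1 + cmod (s + cis x)^2 * P > 0" using P by (simp add: add_pos_nonneg)
      show ?thesis
      proof (cases "A + B * cis x = 0")
        case True
        have "0 \<le> ln (1 + l^2*P*t)" using P t0 by (intro ln_ge_zero) simp
        moreover have "0 \<le> ln (1 + cmod (s + cis x)^2 * P)" using P by (intro ln_ge_zero) simp
        ultimately show ?thesis using True by (simp add: F_def c_def)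
      next
        case False
        have "2 * ln (cmod (A + B * cis x)) = ln (cmod (A + B * cis x)^2)"
          using False by (simp add: ln_realpow)
        also have "\<dots> \<le> ln ((1 + l^2*P*t) * (1 + cmod (s + cis x)^2 * P))"
          using X False by (simp add: ln_le_cancel_iff p1 p2)
        also have "\<dots> = c + F x" using p1 p2 by (simp add: ln_mult c_def F_def)
        finally show ?thesis by simp
      qed
    qed
    have "2 * v - 2*pi*c \<le> I" using has_integral_le[OF G FI] pw by auto
    moreover have "h l \<le> 2 * v - 2*pi*c" using v(1) cA by (simp add: h_def c_def algebra_simps)
    ultimately show ?thesis by linarith
  qed
  have h1: "h 1 = 2*pi*ln (1 + cmod s^2 * P)" by (simp add: h_def t_def algebra_simps)
  show ?thesis
  proof (cases "1 + 1*P*t = 1*P*cmod s")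
    case False
    thus ?thesis using key[of 1] h1 by (simp add: I_def F_def)
  next
    case True
    have ev: "eventually (\<lambda>l. h l \<le> I) (at_right 1)"
      using eventually_at_right_less[of 1]
    proof (rule eventually_mono)
      fix l :: real assume "1 < l"
      moreover have "1 + l*P*t \<noteq> l*P*cmod s"
      proof
        assume "1 + l*P*t = l*P*cmod s"
        hence "l * (P*cmod s - P*t) = 1" by (simp add: algebra_simps)
        moreover have "P*cmod s - P*t = 1" using True by simp
        ultimately show False using \<open>1 < l\<close> by simp
      qed
      ultimately show "h l \<le> I" using key by simp
    qed
    have lim: "(h \<longlongrightarrow> h 1) (at_right 1)" unfolding h_def
      using P t0 by (intro tendsto_intros) (auto simp: add_nonneg_eq_0_iff)
    have "h 1 \<le> I"
      by (rule tendsto_le[OF trivial_limit_at_right_real tendsto_const lim ev])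
    thus ?thesis using h1 by (simp add: I_def F_def)
  qed
qed

lemma unif_int:
  fixes f :: "real \<Rightarrow> real"
  assumes f: "continuous_on UNIV f"
  shows "(\<integral>x. f x \<partial>uniform_measure lborel {0..2*pi}) = integral {0..2*pi} f / (2*pi)"
proof -
  have fm: "f \<in> borel_measurable lborel" using f by (simp add: borel_measurable_continuous_onI)
  have "uniform_measure lborel {0..2*pi} = density lborel (\<lambda>x. ennreal (indicator {0..2*pi} x / (2*pi)))"
  proof -
    have "(indicator {0..2*pi} x :: ennreal) / emeasure lborel {0..2*pi} = ennreal (indicator {0..2*pi} x / (2*pi))" for x
    proof -
      have em: "emeasure lborel {0..2*pi} = ennreal (2*pi)" by simp
      show ?thesis
      proof (cases "x \<in> {0..2*pi}")
        case True
        hence "(indicator {0..2*pi} x :: ennreal) = ennreal 1" by simp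
        moreover have "(indicator {0..2*pi} x :: real) = 1" using True by simp
        ultimately show ?thesis unfolding em using divide_ennreal[of 1 "2*pi"] by simp
      next
        case False
        thus ?thesis by simp
      qed
    qed
    thus ?thesis unfolding uniform_measure_def by simp
  qed
  hence "(\<integral>x. f x \<partial>uniform_measure lborel {0..2*pi}) = (\<integral>x. (indicator {0..2*pi} x / (2*pi)) *\<^sub>R f x \<partial>lborel)"
    using fm by (simp add: integral_density)
  also have "\<dots> = (\<integral>x. indicator {0..2*pi} x *\<^sub>R f x \<partial>lborel) / (2*pi)"
  proof -
    have "(\<lambda>x. (indicator {0..2*pi} x / (2*pi)) *\<^sub>R f x) = (\<lambda>x. (indicator {0..2*pi} x *\<^sub>R f x) / (2*pi))"
      by (rule ext) simp
    thus ?thesis by (simp only: integral_divide_zero)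
  qed
  also have "(\<integral>x. indicator {0..2*pi} x *\<^sub>R f x \<partial>lborel) = integral {0..2*pi} f"
    using set_borel_integral_eq_integral(2)[OF borel_integrable_atLeastAtMost'[OF continuous_on_subset[OF f]]]
    by (simp add: set_lebesgue_integral_def)
  finally show ?thesis .
qed

abbreviation U where "U \<equiv> uniform_measure lborel {0..2*pi::real}"

lemma probU: "prob_space U"
  by (rule prob_space_uniform_measure) auto

lemma cis_meas[measurable]: "cis \<in> borel_measurable borel"
  by (intro borel_measurable_continuous_onI continuous_intros)

lemma g_meas[measurable]: "(\<lambda>z::complex. log b (1 + cmod z ^ 2 * P)) \<in> borel_measurable borel"
  by measurable

lemma S_meas: "(\<lambda>x. \<Sum>l<n. cis (x l)) \<in> borel_measurable (PiM I (\<lambda>_. U))" if "{..<n} \<subseteq> I"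
  by measurable (use that in auto)

lemma C_unif:
  fixes s :: complex and P b :: real
  assumes P: "P \<ge> 0" and b: "b > 1"
  shows "log b (1 + cmod s^2 * P) \<le> (\<integral>y. log b (1 + cmod (s + cis y)^2 * P) \<partial>U)"
proof -
  have cont: "continuous_on UNIV (\<lambda>y. ln (1 + cmod (s + cis y)^2 * P))"
    by (intro continuous_intros) (use P in \<open>auto simp: add_nonneg_eq_0_iff\<close>)
  have "(\<integral>y. log b (1 + cmod (s + cis y)^2 * P) \<partial>U) = (\<integral>y. ln (1 + cmod (s + cis y)^2 * P) \<partial>U) / ln b"
    unfolding log_def by (rule integral_divide_zero)
  also have "(\<integral>y. ln (1 + cmod (s + cis y)^2 * P) \<partial>U) = integral {0..2*pi} (\<lambda>y. ln (1 + cmod (s + cis y)^2 * P)) / (2*pi)"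
    by (rule unif_int[OF cont])
  finally have eq: "(\<integral>y. log b (1 + cmod (s + cis y)^2 * P) \<partial>U) = integral {0..2*pi} (\<lambda>y. ln (1 + cmod (s + cis y)^2 * P)) / (2*pi) / ln b" .
  have "ln (1 + cmod s^2 * P) \<le> integral {0..2*pi} (\<lambda>y. ln (1 + cmod (s + cis y)^2 * P)) / (2*pi)"
    using C_hk[OF P, of s] by (simp add: field_simps)
  hence "ln (1 + cmod s^2 * P) / ln b \<le> integral {0..2*pi} (\<lambda>y. ln (1 + cmod (s + cis y)^2 * P)) / (2*pi) / ln b"
    using b by (intro divide_right_mono) auto
  thus ?thesis unfolding eq by (simp add: log_def)
qed

lemma g_bound:
  fixes z :: complex assumes "P \<ge> 0" "b > 1" "cmod z \<le> m"
  shows "norm (log b (1 + cmod z^2 * P)) \<le> log b (1 + m^2 * P)"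
proof -
  have p: "0 < 1 + cmod z^2 * P" using assms by (simp add: add_pos_nonneg)
  have "0 \<le> log b (1 + cmod z^2 * P)" using assms p by simp
  moreover have "cmod z^2 \<le> m^2" using assms by (intro power_mono) auto
  hence "1 + cmod z^2 * P \<le> 1 + m^2 * P" using assms by (simp add: mult_right_mono)
  hence "log b (1 + cmod z^2 * P) \<le> log b (1 + m^2 * P)"
    using assms p by (intro log_mono) auto
  ultimately show ?thesis by simp
qed

lemma S_bound: "cmod (\<Sum>l<n. cis (x l)) \<le> real n"
proof -
  have "cmod (\<Sum>l<n. cis (x l)) \<le> (\<Sum>l<n. cmod (cis (x l)))" by (rule norm_sum)
  thus ?thesis by simp
qed

lemma Rbar_step:
  assumes P: "P \<ge> 0" and b: "b > 1"
  shows "Rbar b P n \<le> Rbar b P (Suc n)"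
proof -
  interpret PU: prob_space U by (rule probU)
  have sfU: "sigma_finite_measure U" by unfold_locales
  interpret PP: product_prob_space "\<lambda>_::nat. U"
    by (intro product_prob_space.intro product_sigma_finite.intro product_prob_space_axioms.intro sfU probU)
  define g where "g = (\<lambda>z::complex. log b (1 + cmod z ^ 2 * P))"
  have gm[measurable]: "g \<in> borel_measurable borel" unfolding g_def by measurable
  define K where "K = log b (1 + (real n + 1)^2 * P)"
  have gb: "norm (g z) \<le> K" if "cmod z \<le> real n + 1" for z
    unfolding g_def K_def using g_bound[OF P b that] .
  interpret Pn: prob_space "PiM {..<n} (\<lambda>_. U)" by (rule prob_space_PiM) (rule probU)
  interpret PS: prob_space "PiM (insert n {..<n}) (\<lambda>_. U)" by (rule prob_space_PiM) (rule probU)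
  have sfn: "sigma_finite_measure (PiM {..<n} (\<lambda>_. U))" by unfold_locales
  interpret PR: pair_prob_space "PiM {..<n} (\<lambda>_. U)" U
    by (intro pair_prob_space.intro pair_sigma_finite.intro sfn sfU probU Pn.prob_space_axioms)
  have Fint: "integrable (PiM (insert n {..<n}) (\<lambda>_. U)) (\<lambda>x. g (\<Sum>l<Suc n. cis (x l)))"
  proof (rule PS.integrable_const_bound[where B=K])
    show "AE x in PiM (insert n {..<n}) (\<lambda>_. U). norm (g (\<Sum>l<Suc n. cis (x l))) \<le> K"
      using S_bound[where n="Suc n"] by (intro AE_I2 gb) (simp add: add.commute)
    show "(\<lambda>x. g (\<Sum>l<Suc n. cis (x l))) \<in> borel_measurable (PiM (insert n {..<n}) (\<lambda>_. U))"
      using S_meas[of "Suc n" "insert n {..<n}"] by (intro measurable_compose[OF _ gm]) auto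
  qed
  have Gint: "integrable (PiM {..<n} (\<lambda>_. U)) (\<lambda>x. g (\<Sum>l<n. cis (x l)))"
  proof (rule Pn.integrable_const_bound[where B=K])
    show "AE x in PiM {..<n} (\<lambda>_. U). norm (g (\<Sum>l<n. cis (x l))) \<le> K"
      using S_bound[where n=n] by (intro AE_I2 gb) (smt (verit))
    show "(\<lambda>x. g (\<Sum>l<n. cis (x l))) \<in> borel_measurable (PiM {..<n} (\<lambda>_. U))"
      using S_meas[of n "{..<n}"] by (intro measurable_compose[OF _ gm]) auto
  qed
  have Hint2: "integrable (PiM {..<n} (\<lambda>_. U) \<Otimes>\<^sub>M U) (\<lambda>(x,y). g ((\<Sum>l<n. cis (x l)) + cis y))"
  proof (rule PR.P.integrable_const_bound[where B=K])
    show "AE p in PiM {..<n} (\<lambda>_. U) \<Otimes>\<^sub>M U. norm ((\<lambda>(x,y). g ((\<Sum>l<n. cis (x l)) + cis y)) p) \<le> K"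
    proof (intro AE_I2)
      fix p :: "(nat \<Rightarrow> real) \<times> real"
      obtain x y where p: "p = (x,y)" by (cases p)
      have "cmod ((\<Sum>l<n. cis (x l)) + cis y) \<le> cmod (\<Sum>l<n. cis (x l)) + cmod (cis y)" by (rule norm_triangle_ineq)
      also have "\<dots> \<le> real n + 1" using S_bound[where n=n and x=x] by simp
      finally show "norm ((\<lambda>(x,y). g ((\<Sum>l<n. cis (x l)) + cis y)) p) \<le> K" using gb p by simp
    qed
    have [measurable]: "(\<lambda>x. \<Sum>l<n. cis (x l)) \<in> borel_measurable (PiM {..<n} (\<lambda>_. U))"
      by (rule S_meas) simp
    show "(\<lambda>(x,y). g ((\<Sum>l<n. cis (x l)) + cis y)) \<in> borel_measurable (PiM {..<n} (\<lambda>_. U) \<Otimes>\<^sub>M U)"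
      by measurable
  qed
  have Hint: "integrable (PiM {..<n} (\<lambda>_. U)) (\<lambda>x. \<integral>y. g ((\<Sum>l<n. cis (x l)) + cis y) \<partial>U)"
    using PR.integrable_fst'[OF Hint2] by simp
  have "Rbar b P (Suc n) = (\<integral>x. g (\<Sum>l<Suc n. cis (x l)) \<partial>PiM (insert n {..<n}) (\<lambda>_. U))"
    by (simp add: Rbar_def phase_measure_def g_def lessThan_Suc mult.commute)
  also have "\<dots> = (\<integral>x. (\<integral>y. g (\<Sum>l<Suc n. cis ((x(n:=y)) l)) \<partial>U) \<partial>PiM {..<n} (\<lambda>_. U))"
    by (rule PP.product_integral_insert[OF _ _ Fint]) auto
  also have "\<dots> = (\<integral>x. (\<integral>y. g ((\<Sum>l<n. cis (x l)) + cis y) \<partial>U) \<partial>PiM {..<n} (\<lambda>_. U))"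
    by (simp add: sum.lessThan_Suc)
  finally have e1: "Rbar b P (Suc n) = \<dots>" .
  have e2: "Rbar b P n = (\<integral>x. g (\<Sum>l<n. cis (x l)) \<partial>PiM {..<n} (\<lambda>_. U))"
    by (simp add: Rbar_def phase_measure_def g_def mult.commute)
  have "(\<integral>x. g (\<Sum>l<n. cis (x l)) \<partial>PiM {..<n} (\<lambda>_. U)) \<le> (\<integral>x. (\<integral>y. g ((\<Sum>l<n. cis (x l)) + cis y) \<partial>U) \<partial>PiM {..<n} (\<lambda>_. U))"
    by (rule integral_mono[OF Gint Hint]) (unfold g_def, rule C_unif[OF P b])
  thus ?thesis using e1 e2 by simp
qed

lemma Rbar_0: "Rbar b P 0 = 0"
  by (simp add: Rbar_def)

lemma Rbar_mono:
  assumes "P \<ge> 0" "b > 1" "i \<le> k"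
  shows "Rbar b P i \<le> Rbar b P k"
  using assms(3)
proof (induction k rule: dec_induct)
  case (step k)
  thus ?case using Rbar_step[OF assms(1,2), of k] by linarith
qed simp

lemma comb:
  fixes p :: "nat pmf" and R :: "nat \<Rightarrow> real"
  assumes L: "L \<ge> 1" and sp: "set_pmf p \<subseteq> {..L}" and R0: "R 0 = 0"
    and Rm: "\<And>i k. i \<le> k \<Longrightarrow> R i \<le> R k"
  shows "(SUP r::real. r * measure_pmf.prob p {k. R k \<ge> r})
       = Max ((\<lambda>i. measure_pmf.prob p {k. k \<ge> i} * R i) ` {1..L})"
proof -
  define M where "M = Max ((\<lambda>i. measure_pmf.prob p {k. k \<ge> i} * R i) ` {1..L})"
  have fin: "finite ((\<lambda>i. measure_pmf.prob p {k. k \<ge> i} * R i) ` {1..L})" by simp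
  have ne: "(\<lambda>i. measure_pmf.prob p {k. k \<ge> i} * R i) ` {1..L} \<noteq> {}" using L by auto
  have Rnn: "R i \<ge> 0" for i using Rm[of 0 i] R0 by simp
  have Mge: "measure_pmf.prob p {k. k \<ge> i} * R i \<le> M" if "i \<in> {1..L}" for i
    unfolding M_def using fin that by (intro Max_ge) auto
  have M0: "M \<ge> 0" using Mge[of 1] L Rnn[of 1] by (smt (verit) atLeastAtMost_iff measure_nonneg mult_nonneg_nonneg order_refl)
  have ub: "r * measure_pmf.prob p {k. R k \<ge> r} \<le> M" for r
  proof (cases "r \<le> 0")
    case True
    thus ?thesis using M0 by (smt (verit) measure_nonneg mult_nonpos_nonneg)
  next
    case False
    define S where "S = {k. R k \<ge> r}"
    show ?thesis
    proof (cases "\<exists>k. k \<in> S \<and> k \<le> L")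
      case False
      hence "S \<inter> set_pmf p = {}" using sp by auto
      hence "measure_pmf.prob p S = 0"
        by (metis measure_Int_set_pmf measure_empty)
      thus ?thesis using M0 by (simp add: S_def)
    next
      case True
      define i where "i = (LEAST k. k \<in> S \<and> k \<le> L)"
      have iS: "i \<in> S \<and> i \<le> L" unfolding i_def using True by (metis (mono_tags, lifting) LeastI)
      have imin: "i \<le> k" if "k \<in> S" "k \<le> L" for k unfolding i_def using that by (simp add: Least_le)
      have i1: "i \<ge> 1" using iS False R0 by (cases i) (auto simp: S_def)
      have "measure_pmf.prob p S = measure_pmf.prob p (S \<inter> set_pmf p)"
        by (simp add: measure_Int_set_pmf)
      also have "\<dots> \<le> measure_pmf.prob p {k. k \<ge> i}"
        using sp imin by (intro measure_pmf.finite_measure_mono) auto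
      finally have pS: "measure_pmf.prob p S \<le> measure_pmf.prob p {k. k \<ge> i}" .
      have "r * measure_pmf.prob p S \<le> R i * measure_pmf.prob p {k. k \<ge> i}"
        using iS False pS by (intro mult_mono) (auto simp: S_def)
      also have "\<dots> \<le> M" using Mge[of i] i1 iS by (simp add: mult.commute)
      finally show ?thesis by (simp add: S_def)
    qed
  qed
  have bdd: "bdd_above (range (\<lambda>r. r * measure_pmf.prob p {k. R k \<ge> r}))"
    using ub by (intro bdd_aboveI2) blast
  have "M \<in> (\<lambda>i. measure_pmf.prob p {k. k \<ge> i} * R i) ` {1..L}"
    unfolding M_def using fin ne by (rule Max_in)
  then obtain i where i: "i \<in> {1..L}" "M = measure_pmf.prob p {k. k \<ge> i} * R i" by auto
  have "M \<le> R i * measure_pmf.prob p {k. R k \<ge> R i}"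
  proof -
    have "measure_pmf.prob p {k. k \<ge> i} \<le> measure_pmf.prob p {k. R k \<ge> R i}"
      using Rm by (intro measure_pmf.finite_measure_mono) auto
    thus ?thesis using i Rnn[of i] by (simp add: mult.commute mult_left_mono)
  qed
  also have "\<dots> \<le> (SUP r::real. r * measure_pmf.prob p {k. R k \<ge> r})"
    by (rule cSUP_upper[OF _ bdd]) simp
  finally have "M \<le> (SUP r::real. r * measure_pmf.prob p {k. R k \<ge> r})" .
  moreover have "(SUP r::real. r * measure_pmf.prob p {k. R k \<ge> r}) \<le> M"
    by (rule cSUP_least) (auto intro: ub)
  ultimately show ?thesis unfolding M_def by linarith
qed

theorem proposition6:
  fixes L :: nat and P pB b :: real
  assumes "L \<ge> 1" and "P \<ge> 0" and "0 \<le> pB" and "pB \<le> 1" and "b > 1"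
  shows "(SUP r::real. r * measure_pmf.prob (binomial_pmf L (1 - pB)) {k. Rbar b P k \<ge> r})
       = Max ((\<lambda>i. measure_pmf.prob (binomial_pmf L (1 - pB)) {k. k \<ge> i} * Rbar b P i) ` {1..L})"
proof (rule comb[OF assms(1)])
  show "set_pmf (binomial_pmf L (1 - pB)) \<subseteq> {..L}"
    using assms by (auto simp: set_pmf_binomial_eq)
  show "Rbar b P 0 = 0" by (rule Rbar_0)
  show "\<And>i k. i \<le> k \<Longrightarrow> Rbar b P i \<le> Rbar b P k" using Rbar_mono[OF assms(2,5)] .
qed

end
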